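(* For $n=2$ (so $d_2=\frac34$), $\lim_{h\to3/4}\tilde B_2(h)=\frac35$, and consequently the limit wave speed $c_0(h)=\frac{1}{1-\tilde B_2(h)}$ satisfies $\lim_{h\to3/4}c_0(h)=\frac52$.
   Context: For $n=2$: $W(u)=\frac{u^2}{2}-\frac{u^4}{12}$, $H(u,v)=\frac{v^2}{2}+W(u)$; for $h\in(0,\frac34)$, $\Gamma_h$ is the periodic orbit in $\{H=h\}$ surrounding the origin of $u'=v$, $v'=-u+\frac13u^3$, oriented clockwise; $\tilde B_2(h)=\oint_{\Gamma_h}u^2v\,du\big/\oint_{\Gamma_h}v\,du$. *)

theory Defs
  imports "HOL-Analysis.Analysis"
begin

definition W2 :: "real \<Rightarrow> real" where
  "W2 u = u^2 / 2 - u^4 / 12"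

definition H2 :: "real \<Rightarrow> real \<Rightarrow> real" where
  "H2 u v = v^2 / 2 + W2 u"

definition field2 :: "real \<times> real \<Rightarrow> real \<times> real" where
  "field2 p = (snd p, - fst p + (fst p)^3 / 3)"

text \<open>A time parametrisation of the periodic orbit Gamma_h: the solution of the
  ODE through the point (0, sqrt(2h)) of the oval {H = h} around the origin,
  T-periodic with minimal period T. The flow direction is clockwise.\<close>
definition periodic_orbit2 :: "real \<Rightarrow> real \<Rightarrow> (real \<Rightarrow> real \<times> real) \<Rightarrow> bool" where
  "periodic_orbit2 h T g \<longleftrightarrow>
     T > 0 \<and> g 0 = (0, sqrt (2 * h)) \<and>
     (\<forall>t. (g has_vector_derivative field2 (g t)) (at t)) \<and>
     (\<forall>t. g (t + T) = g t) \<and>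
     (\<forall>t\<in>{0<..<T}. g t \<noteq> g 0)"

definition line_int_du :: "(real \<Rightarrow> real \<Rightarrow> real) \<Rightarrow> real \<Rightarrow> (real \<Rightarrow> real \<times> real) \<Rightarrow> real" where
  "line_int_du P T g = integral {0..T} (\<lambda>t. P (fst (g t)) (snd (g t)) * fst (vector_derivative g (at t)))"

definition B2tilde :: "real \<Rightarrow> real" where
  "B2tilde h = (let (T, g) = (SOME (T, g). periodic_orbit2 h T g) in
      line_int_du (\<lambda>u v. u^2 * v) T g / line_int_du (\<lambda>u v. v) T g)"

definition c0 :: "real \<Rightarrow> real" where
  "c0 h = 1 / (1 - B2tilde h)"

end

theory Submission imports Defs begin

definition qf :: "real \<Rightarrow> real \<Rightarrow> real" where
  "qf a x = sqrt (1 - a^2 * (1 + (sin x)^2) / 6)"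

lemma qf_rad_pos: fixes a :: real assumes "a^2 < 3" shows "1 - a^2 * (1 + (sin x)^2) / 6 > 0"
proof -
  have "(sin x)^2 \<le> 1" by (simp add: abs_square_le_1 abs_sin_le_one)
  hence "a^2 * (1 + (sin x)^2) \<le> a^2 * 2" by (intro mult_left_mono) auto
  thus ?thesis using assms by linarith
qed

lemma qf_pos: "(a::real)^2 < 3 \<Longrightarrow> qf a x > 0"
  unfolding qf_def using qf_rad_pos by simp

lemma qf_le1: "qf a x \<le> 1"
proof -
  have "a^2 * (1 + (sin x)^2) \<ge> 0" by simp
  thus ?thesis unfolding qf_def by simp
qed

lemma qf_sq: "(a::real)^2 < 3 \<Longrightarrow> (qf a x)^2 = 1 - a^2 * (1 + (sin x)^2) / 6"
  unfolding qf_def using qf_rad_pos[of a x] by simp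

lemma qf_deriv: fixes a :: real assumes "a^2 < 3"
  shows "(qf a has_real_derivative (- (a^2 * sin x * cos x) / (6 * qf a x))) (at x)"
proof -
  have "((\<lambda>x. sqrt (1 - a^2 * (1 + (sin x)^2) / 6)) has_real_derivative
      inverse (sqrt (1 - a^2 * (1 + (sin x)^2) / 6)) / 2 * (- (a^2 * (2 * sin x * cos x)) / 6)) (at x)"
    using qf_rad_pos[OF assms, of x]
    by (auto intro!: derivative_eq_intros)
  moreover have "inverse (sqrt (1 - a^2 * (1 + (sin x)^2) / 6)) / 2 * (- (a^2 * (2 * sin x * cos x)) / 6)
     = - (a^2 * sin x * cos x) / (6 * qf a x)"
    unfolding qf_def by (simp add: field_simps)
  ultimately show ?thesis unfolding qf_def[abs_def] by (simp add: mult.commute)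
qed

lemma qf_cont: "(a::real)^2 < 3 \<Longrightarrow> continuous_on S (qf a)"
  by (meson DERIV_continuous continuous_at_imp_continuous_on qf_deriv)

lemma qf_periodic: "qf a (x + 2*pi) = qf a x"
  unfolding qf_def by simp

definition prim :: "(real \<Rightarrow> real) \<Rightarrow> real \<Rightarrow> real" where
  "prim f x = (if 0 \<le> x then integral {0..x} f else - integral {x..0} f)"

lemma prim_eq:
  assumes f: "continuous_on UNIV f" and R: "0 \<le> R" and y: "y \<in> {-R..R}"
  shows "prim f y = integral {-R..y} f - integral {-R..0} f"
proof -
  have int: "\<And>c d. f integrable_on {c..d}"
    by (intro integrable_continuous_real continuous_on_subset[OF f]) auto
  show ?thesis
  proof (cases "0 \<le> y")
    case True
    have "integral {-R..0} f + integral {0..y} f = integral {-R..y} f"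
      by (rule Henstock_Kurzweil_Integration.integral_combine) (use True R int in auto)
    thus ?thesis using True by (simp add: prim_def)
  next
    case False
    have "integral {-R..y} f + integral {y..0} f = integral {-R..0} f"
      by (rule Henstock_Kurzweil_Integration.integral_combine) (use False y int in auto)
    thus ?thesis using False by (simp add: prim_def)
  qed
qed

lemma prim_deriv:
  assumes f: "continuous_on UNIV f"
  shows "(prim f has_real_derivative f x) (at x)"
proof -
  define R where "R = \<bar>x\<bar> + 1"
  have R0: "0 \<le> R" unfolding R_def by auto
  have R1: "x \<in> {-R<..<R}" unfolding R_def by auto
  have R2: "x \<in> {-R..R}" unfolding R_def by auto
  have c: "continuous_on {-R..R} f" using f continuous_on_subset by blast
  have d1: "((\<lambda>u. integral {-R..u} f) has_vector_derivative f x) (at x within {-R..R})"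
    using integral_has_vector_derivative[OF c R2] .
  have d2: "((\<lambda>u. integral {-R..u} f) has_vector_derivative f x) (at x within {-R<..<R})"
    using has_vector_derivative_within_subset[OF d1 greaterThanLessThan_subseteq_atLeastAtMost_iff[THEN iffD2]]
    by simp
  have d3: "((\<lambda>u. integral {-R..u} f) has_vector_derivative f x) (at x)"
    using d2 at_within_open[OF R1 open_greaterThanLessThan] by simp
  have d4: "((\<lambda>u. integral {-R..u} f - integral {-R..0} f) has_vector_derivative f x) (at x)"
    using has_vector_derivative_diff[OF d3 has_vector_derivative_const] by simp
  have "(prim f has_vector_derivative f x) (at x)"
    apply (rule has_vector_derivative_transform_within_open[OF d4 open_greaterThanLessThan R1])
    using prim_eq[OF f R0] by (simp add: subset_iff)
  thus ?thesis by (simp add: has_real_derivative_iff_has_vector_derivative)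
qed

lemma prim_0: "prim f 0 = 0" by (simp add: prim_def)

definition tau :: "real \<Rightarrow> real \<Rightarrow> real" where
  "tau a = prim (\<lambda>s. 1 / qf a s)"

lemma tau_deriv: assumes "(a::real)^2 < 3" shows "(tau a has_real_derivative 1 / qf a x) (at x)"
proof -
  have nz: "\<And>s. qf a s \<noteq> 0" using qf_pos[OF assms] by (simp add: less_imp_neq[symmetric])
  have "continuous_on UNIV (\<lambda>s. 1 / qf a s)"
    by (rule continuous_on_divide[OF continuous_on_const qf_cont[OF assms]]) (use nz in auto)
  thus ?thesis unfolding tau_def by (rule prim_deriv)
qed

lemma tau_0: "tau a 0 = 0" by (simp add: tau_def prim_0)

lemma inv_qf_ge1: "(a::real)^2 < 3 \<Longrightarrow> 1 / qf a x \<ge> 1"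
  using qf_pos[of a x] qf_le1[of a x] by (simp add: field_simps)

lemma tau_strict: assumes "(a::real)^2 < 3" "x < y" shows "tau a x < tau a y"
proof (rule DERIV_pos_imp_increasing[where f="tau a", OF assms(2)])
  fix z
  show "\<exists>d. (tau a has_real_derivative d) (at z) \<and> 0 < d"
    using tau_deriv[OF assms(1), of z] qf_pos[OF assms(1), of z]
    by (intro exI[of _ "1 / qf a z"]) auto
qed

lemma tau_mono_iff: assumes "(a::real)^2 < 3" shows "tau a x < tau a y \<longleftrightarrow> x < y"
proof
  assume h: "tau a x < tau a y"
  show "x < y"
  proof (rule ccontr)
    assume "\<not> x < y"
    hence "y < x \<or> y = x" by linarith
    thus False using tau_strict[OF assms, of y x] h by auto
  qed
qed (rule tau_strict[OF assms])

lemma tau_inj: assumes "(a::real)^2 < 3" shows "tau a x = tau a y \<longleftrightarrow> x = y"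
proof
  assume h: "tau a x = tau a y"
  show "x = y"
  proof (rule ccontr)
    assume "x \<noteq> y"
    hence "x < y \<or> y < x" by linarith
    thus False using tau_strict[OF assms, of x y] tau_strict[OF assms, of y x] h by auto
  qed
qed simp

lemma tau_cont: "(a::real)^2 < 3 \<Longrightarrow> isCont (tau a) x"
  using DERIV_isCont tau_deriv by blast

lemma tau_ge: assumes "(a::real)^2 < 3" "0 \<le> x" shows "x \<le> tau a x"
proof -
  have "(\<lambda>x. tau a x - x) 0 \<le> (\<lambda>x. tau a x - x) x"
  proof (rule DERIV_nonneg_imp_nondecreasing[where f="\<lambda>x. tau a x - x"])
    fix z
    have "((\<lambda>x. tau a x - x) has_real_derivative 1 / qf a z - 1) (at z)"
      by (intro DERIV_diff tau_deriv[OF assms(1)] DERIV_ident)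
    thus "\<exists>d. ((\<lambda>x. tau a x - x) has_real_derivative d) (at z) \<and> 0 \<le> d"
      using inv_qf_ge1[OF assms(1), of z] by force
  qed (use assms(2) in auto)
  thus ?thesis by (simp add: tau_0)
qed

lemma tau_le: assumes "(a::real)^2 < 3" "x \<le> 0" shows "tau a x \<le> x"
proof -
  have "(\<lambda>x. tau a x - x) x \<le> (\<lambda>x. tau a x - x) 0"
  proof (rule DERIV_nonneg_imp_nondecreasing[where f="\<lambda>x. tau a x - x"])
    fix z
    have "((\<lambda>x. tau a x - x) has_real_derivative 1 / qf a z - 1) (at z)"
      by (intro DERIV_diff tau_deriv[OF assms(1)] DERIV_ident)
    thus "\<exists>d. ((\<lambda>x. tau a x - x) has_real_derivative d) (at z) \<and> 0 \<le> d"
      using inv_qf_ge1[OF assms(1), of z] by force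
  qed (use assms(2) in auto)
  thus ?thesis by (simp add: tau_0)
qed

lemma tau_surj: assumes "(a::real)^2 < 3" shows "\<exists>x. tau a x = t"
proof -
  have "tau a (-\<bar>t\<bar>) \<le> t" using tau_le[OF assms, of "-\<bar>t\<bar>"] by linarith
  moreover have "t \<le> tau a \<bar>t\<bar>" using tau_ge[OF assms, of "\<bar>t\<bar>"] by linarith
  moreover have "-\<bar>t\<bar> \<le> \<bar>t\<bar>" by simp
  moreover have "\<forall>x. -\<bar>t\<bar> \<le> x \<and> x \<le> \<bar>t\<bar> \<longrightarrow> isCont (tau a) x" using tau_cont[OF assms] by blast
  ultimately have "\<exists>x\<ge>-\<bar>t\<bar>. x \<le> \<bar>t\<bar> \<and> tau a x = t"
    by (rule IVT)
  thus ?thesis by blast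
qed

definition th :: "real \<Rightarrow> real \<Rightarrow> real" where
  "th a t = (THE x. tau a x = t)"

lemma tau_th: assumes "(a::real)^2 < 3" shows "tau a (th a t) = t"
proof -
  obtain x where x: "tau a x = t" using tau_surj[OF assms] by blast
  have "\<exists>!x. tau a x = t"
  proof (rule ex1I[of _ x])
    fix y assume "tau a y = t"
    thus "y = x" using tau_inj[OF assms, of y x] x by simp
  qed (rule x)
  thus ?thesis unfolding th_def by (rule theI')
qed

lemma th_tau: assumes "(a::real)^2 < 3" shows "th a (tau a x) = x"
proof -
  have "tau a (th a (tau a x)) = tau a x" by (rule tau_th[OF assms])
  thus ?thesis using tau_inj[OF assms] by simp
qed

lemma th_deriv: assumes "(a::real)^2 < 3"
  shows "(th a has_real_derivative qf a (th a t)) (at t)"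
proof -
  have i1: "\<And>z. th a (tau a z) = z" by (rule th_tau[OF assms])
  have i2: "\<And>z. isCont (tau a) z" by (rule tau_cont[OF assms])
  have "isCont (th a) (tau a (th a t))"
    by (rule isCont_inverse_function[where d=1 and f="tau a"]) (simp_all only: i1 i2 zero_less_one)
  hence c: "isCont (th a) t" by (simp only: tau_th[OF assms])
  have q: "1 / qf a (th a t) \<noteq> 0" using qf_pos[OF assms, of "th a t"] by simp
  have "(th a has_real_derivative inverse (1 / qf a (th a t))) (at t)"
    by (rule DERIV_inverse_function[where f="tau a" and a="t-1" and b="t+1", OF tau_deriv[OF assms] q _ _ _ c])
       (simp_all add: tau_th[OF assms])
  thus ?thesis by simp
qed

definition Tper :: "real \<Rightarrow> real" where "Tper a = tau a (2*pi)"

lemma tau_period: assumes "(a::real)^2 < 3" shows "tau a (x + 2*pi) = tau a x + Tper a"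
proof -
  have "\<And>x. ((\<lambda>x. tau a (x + 2*pi) - tau a x) has_real_derivative 0) (at x)"
  proof -
    fix x
    have d1: "((\<lambda>x. x + 2*pi) has_real_derivative 1) (at x)"
      by (auto intro!: derivative_eq_intros)
    have "((\<lambda>x. tau a (x + 2*pi) - tau a x) has_real_derivative (1 / qf a (x + 2*pi)) * 1 - 1 / qf a x) (at x)"
      by (intro DERIV_diff DERIV_chain2[OF tau_deriv[OF assms] d1] tau_deriv[OF assms])
    thus "((\<lambda>x. tau a (x + 2*pi) - tau a x) has_real_derivative 0) (at x)"
      by (simp add: qf_periodic)
  qed
  hence "(\<lambda>x. tau a (x + 2*pi) - tau a x) x = (\<lambda>x. tau a (x + 2*pi) - tau a x) 0"
    using DERIV_isconst_all[where f="\<lambda>x. tau a (x + 2*pi) - tau a x"] by blast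
  thus ?thesis by (simp add: Tper_def tau_0)
qed

lemma Tper_pos: "(a::real)^2 < 3 \<Longrightarrow> Tper a > 0"
  unfolding Tper_def using tau_ge[of a "2*pi"] pi_gt3 by simp

lemma th_0: "(a::real)^2 < 3 \<Longrightarrow> th a 0 = 0"
  using th_tau[of a 0] tau_0 by simp

lemma th_Tper: "(a::real)^2 < 3 \<Longrightarrow> th a (Tper a) = 2*pi"
  using th_tau[of a "2*pi"] by (simp add: Tper_def)

lemma th_period: assumes "(a::real)^2 < 3" shows "th a (t + Tper a) = th a t + 2*pi"
proof -
  have "tau a (th a t + 2*pi) = t + Tper a" using tau_period[OF assms] tau_th[OF assms] by simp
  hence "th a (tau a (th a t + 2*pi)) = th a (t + Tper a)" by simp
  thus ?thesis using th_tau[OF assms] by simp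
qed

lemma th_strict: assumes "(a::real)^2 < 3" shows "th a s < th a t \<longleftrightarrow> s < t"
  using tau_mono_iff[OF assms, of "th a s" "th a t"] tau_th[OF assms] by simp

definition cc :: "real \<Rightarrow> real \<Rightarrow> real \<times> real" where
  "cc a x = (a * sin x, a * cos x * qf a x)"

definition gg :: "real \<Rightarrow> real \<Rightarrow> real \<times> real" where
  "gg a t = cc a (th a t)"

lemma gg_u_deriv: assumes "(a::real)^2 < 3"
  shows "((\<lambda>t. a * sin (th a t)) has_real_derivative a * cos (th a t) * qf a (th a t)) (at t)"
proof -
  have "((\<lambda>t. a * sin (th a t)) has_real_derivative a * (cos (th a t) * qf a (th a t))) (at t)"
    by (intro DERIV_cmult DERIV_chain2[OF DERIV_sin th_deriv[OF assms]])
  thus ?thesis by (simp add: mult.assoc)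
qed

lemma v_identity:
  fixes A S C Q :: real
  assumes q: "Q \<noteq> 0" and qq: "Q^2 = 1 - A^2 * (1 + S^2) / 6" and cs: "S^2 + C^2 = 1"
  shows "A * (- S * Q) * Q + (- (A^2 * S * C) / (6 * Q) * Q) * (A * C) = - (A * S) + (A * S)^3 / 3"
proof -
  have e1: "(- (A^2 * S * C) / (6 * Q) * Q) * (A * C) = - (A^3 * S * C^2) / 6"
    using q by (simp add: field_simps power2_eq_square power3_eq_cube)
  have e2: "A * (- S * Q) * Q = - A * S * Q^2" by (simp add: power2_eq_square)
  have e3: "C^2 = 1 - S^2" using cs by simp
  have "A * (- S * Q) * Q + (- (A^2 * S * C) / (6 * Q) * Q) * (A * C)
     = - A * S * (1 - A^2 * (1 + S^2) / 6) - (A^3 * S * (1 - S^2)) / 6"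
    unfolding e1 e2 e3 qq by simp
  also have "\<dots> = - (A * S) + (A * S)^3 / 3"
    by (simp add: field_simps power2_eq_square power3_eq_cube)
  finally show ?thesis .
qed

lemma gg_v_deriv: assumes "(a::real)^2 < 3"
  shows "((\<lambda>t. a * cos (th a t) * qf a (th a t)) has_real_derivative
     - (a * sin (th a t)) + (a * sin (th a t))^3 / 3) (at t)"
proof -
  let ?x = "th a t"
  have d1: "((\<lambda>t. a * cos (th a t)) has_real_derivative a * (- sin ?x * qf a ?x)) (at t)"
    by (intro DERIV_cmult DERIV_chain2[OF DERIV_cos th_deriv[OF assms]])
  have d2: "((\<lambda>t. qf a (th a t)) has_real_derivative
       (- (a^2 * sin ?x * cos ?x) / (6 * qf a ?x)) * qf a ?x) (at t)"
    by (intro DERIV_chain2[OF qf_deriv[OF assms] th_deriv[OF assms]])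
  have "((\<lambda>t. a * cos (th a t) * qf a (th a t)) has_real_derivative
      a * (- sin ?x * qf a ?x) * qf a ?x + ((- (a^2 * sin ?x * cos ?x) / (6 * qf a ?x)) * qf a ?x) * (a * cos ?x)) (at t)"
    by (rule DERIV_mult[OF d1 d2])
  moreover have "a * (- sin ?x * qf a ?x) * qf a ?x + ((- (a^2 * sin ?x * cos ?x) / (6 * qf a ?x)) * qf a ?x) * (a * cos ?x)
     = - (a * sin ?x) + (a * sin ?x)^3 / 3"
    by (rule v_identity) (use qf_pos[OF assms, of ?x] qf_sq[OF assms, of ?x] in auto)
  ultimately show ?thesis by simp
qed

lemma gg_deriv: assumes "(a::real)^2 < 3"
  shows "(gg a has_vector_derivative field2 (gg a t)) (at t)"
proof -
  have "((\<lambda>t. (a * sin (th a t), a * cos (th a t) * qf a (th a t))) has_vector_derivative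
     (a * cos (th a t) * qf a (th a t), - (a * sin (th a t)) + (a * sin (th a t))^3 / 3)) (at t)"
    using gg_u_deriv[OF assms] gg_v_deriv[OF assms]
    by (intro has_vector_derivative_Pair) (simp_all add: has_real_derivative_iff_has_vector_derivative)
  thus ?thesis unfolding gg_def[abs_def] cc_def field2_def by simp
qed

lemma gg_0: assumes "(a::real)^2 < 3" "0 < a"
  shows "gg a 0 = (0, sqrt (a^2 - a^4/6))"
proof -
  have e: "a^2 * (1 - a^2/6) = a^2 - a^4/6" by (simp add: algebra_simps power2_eq_square power4_eq_xxxx)
  have "a * qf a 0 = sqrt (a^2) * sqrt (1 - a^2/6)" using assms(2) by (simp add: qf_def)
  also have "\<dots> = sqrt (a^2 * (1 - a^2/6))" by (simp only: real_sqrt_mult)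
  also have "\<dots> = sqrt (a^2 - a^4/6)" by (simp only: e)
  finally show ?thesis using th_0[OF assms(1)] by (simp add: gg_def cc_def)
qed

lemma gg_period: assumes "(a::real)^2 < 3" shows "gg a (t + Tper a) = gg a t"
  using th_period[OF assms, of t] by (simp add: gg_def cc_def qf_periodic)

lemma gg_ne: assumes "(a::real)^2 < 3" "0 < a" "t \<in> {0<..<Tper a}"
  shows "gg a t \<noteq> gg a 0"
proof
  assume eq: "gg a t = gg a 0"
  let ?x = "th a t"
  have x: "0 < ?x" "?x < 2*pi"
    using th_strict[OF assms(1), of 0 t] th_strict[OF assms(1), of t "Tper a"] assms(3)
      th_0[OF assms(1)] th_Tper[OF assms(1)] by auto
  have s: "sin ?x = 0" using eq assms(2) th_0[OF assms(1)] by (simp add: gg_def cc_def)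
  hence "qf a ?x = qf a 0" by (simp add: qf_def)
  hence "cos ?x = 1" using eq assms(2) th_0[OF assms(1)] qf_pos[OF assms(1), of 0]
    by (simp add: gg_def cc_def)
  from cos_one_2pi_int[THEN iffD1, OF this] obtain n :: int where n: "?x = of_int n * 2 * pi" by blast
  have "0 < of_int n * (2*pi)" using x(1) n by (simp add: mult.assoc)
  hence "0 < (of_int n::real)" using pi_gt_zero by (simp add: zero_less_mult_iff)
  hence "0 < n" by simp
  moreover have "of_int n * (2*pi) < 1 * (2*pi)" using x(2) n by (simp add: mult.assoc)
  hence "(of_int n::real) < 1" by (rule mult_right_less_imp_less) simp
  hence "n < 1" by simp
  ultimately show False by simp
qed

definition aa :: "real \<Rightarrow> real" where "aa h = sqrt (3 - sqrt (9 - 12 * h))"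

lemma aa_props: assumes "0 < h" "h < 3/4"
  shows "0 < aa h" "(aa h)^2 < 3" "(aa h)^2 = 3 - sqrt (9 - 12*h)" "(aa h)^2 - (aa h)^4/6 = 2 * h"
proof -
  have s0: "0 < sqrt (9 - 12*h)" using assms by simp
  have n: "sqrt 9 = 3" by (rule real_sqrt_unique) auto
  have "sqrt (9 - 12*h) < sqrt 9" using assms by (intro real_sqrt_less_mono) simp
  hence s3: "sqrt (9 - 12*h) < 3" using n by simp
  show a2: "(aa h)^2 = 3 - sqrt (9 - 12*h)" using s3 by (simp add: aa_def)
  show "0 < aa h" using s3 by (simp add: aa_def)
  show "(aa h)^2 < 3" using a2 s0 by simp
  have "(sqrt (9 - 12*h))^2 = 9 - 12*h" using assms by simp
  moreover have "(aa h)^4 = ((aa h)^2)^2" by simp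
  ultimately show "(aa h)^2 - (aa h)^4/6 = 2 * h" unfolding a2
    by (simp add: power2_eq_square algebra_simps)
qed

lemma orbit_exists: assumes "0 < h" "h < 3/4"
  shows "periodic_orbit2 h (Tper (aa h)) (gg (aa h))"
proof -
  note p = aa_props[OF assms]
  have g0: "gg (aa h) 0 = (0, sqrt (2*h))" using gg_0[OF p(2,1)] p(4) by simp
  have d: "\<forall>t. (gg (aa h) has_vector_derivative field2 (gg (aa h) t)) (at t)" using gg_deriv[OF p(2)] by blast
  have pp: "\<forall>t. gg (aa h) (t + Tper (aa h)) = gg (aa h) t" using gg_period[OF p(2)] by blast
  have ne: "\<forall>t\<in>{0<..<Tper (aa h)}. gg (aa h) t \<noteq> gg (aa h) 0" using gg_ne[OF p(2,1)] by blast
  show ?thesis unfolding periodic_orbit2_def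
    using g0 d pp ne Tper_pos[OF p(2)] by blast
qed

definition sol :: "real \<Rightarrow> (real \<Rightarrow> real \<times> real) \<Rightarrow> bool" where
  "sol h g \<longleftrightarrow> g 0 = (0, sqrt (2 * h)) \<and> (\<forall>t. (g has_vector_derivative field2 (g t)) (at t))"

lemma comp_derivs:
  assumes "(g has_vector_derivative (x, y)) (at t)"
  shows "((\<lambda>t. fst (g t)) has_real_derivative x) (at t)"
        "((\<lambda>t. snd (g t)) has_real_derivative y) (at t)"
proof -
  have g: "(g has_derivative (\<lambda>s. s *\<^sub>R (x, y))) (at t)"
    using assms by (simp add: has_vector_derivative_def)
  have "((\<lambda>t. fst (g t)) has_derivative (\<lambda>s. fst (s *\<^sub>R (x, y)))) (at t)"
    by (rule has_derivative_fst[OF g])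
  moreover have "(\<lambda>s. fst (s *\<^sub>R (x, y))) = (*) x" by (auto simp: fun_eq_iff)
  ultimately show "((\<lambda>t. fst (g t)) has_real_derivative x) (at t)"
    by (simp add: has_field_derivative_def)
  have "((\<lambda>t. snd (g t)) has_derivative (\<lambda>s. snd (s *\<^sub>R (x, y)))) (at t)"
    by (rule has_derivative_snd[OF g])
  moreover have "(\<lambda>s. snd (s *\<^sub>R (x, y))) = (*) y" by (auto simp: fun_eq_iff)
  ultimately show "((\<lambda>t. snd (g t)) has_real_derivative y) (at t)"
    by (simp add: has_field_derivative_def)
qed

lemma sol_derivs:
  assumes "sol h g"
  shows "((\<lambda>t. fst (g t)) has_real_derivative snd (g t)) (at t)"
        "((\<lambda>t. snd (g t)) has_real_derivative - fst (g t) + (fst (g t))^3 / 3) (at t)"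
  using comp_derivs[of g "snd (g t)" "- fst (g t) + (fst (g t))^3 / 3" t] assms
  by (simp_all add: sol_def field2_def)

lemma sol_H:
  assumes "sol h g" "0 \<le> h"
  shows "(snd (g t))^2 / 2 + ((fst (g t))^2 / 2 - (fst (g t))^4 / 12) = h"
proof -
  define F where "F t = (snd (g t))^2 / 2 + ((fst (g t))^2 / 2 - (fst (g t))^4 / 12)" for t
  have "\<forall>t. (F has_real_derivative 0) (at t)"
  proof
    fix t
    have "(F has_real_derivative
       (2 * snd (g t) * (- fst (g t) + (fst (g t))^3 / 3)) / 2 +
       ((2 * fst (g t) * snd (g t)) / 2 - (4 * (fst (g t))^3 * snd (g t)) / 12)) (at t)"
      unfolding F_def[abs_def]
      using sol_derivs[OF assms(1), of t]
      by (auto intro!: derivative_eq_intros simp: power2_eq_square power3_eq_cube)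
    moreover have "(2 * snd (g t) * (- fst (g t) + (fst (g t))^3 / 3)) / 2 +
       ((2 * fst (g t) * snd (g t)) / 2 - (4 * (fst (g t))^3 * snd (g t)) / 12) = 0"
      by (simp add: field_simps power3_eq_cube)
    ultimately show "(F has_real_derivative 0) (at t)" by simp
  qed
  hence "F t = F 0" by (rule DERIV_isconst_all)
  moreover have "F 0 = h" using assms unfolding F_def sol_def by simp
  ultimately show ?thesis unfolding F_def by simp
qed

lemma sol_u_bound:
  assumes "sol h g" "0 < h" "h < 3/4" "0 \<le> t"
  shows "(fst (g t))^2 \<le> 3"
proof (rule ccontr)
  assume "\<not> (fst (g t))^2 \<le> 3"
  hence big: "3 < (fst (g t))^2" by simp
  have cont: "\<forall>x. 0 \<le> x \<and> x \<le> t \<longrightarrow> isCont (\<lambda>s. (fst (g s))^2) x"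
  proof (intro allI impI)
    fix x
    have "isCont (\<lambda>s. fst (g s)) x" using sol_derivs(1)[OF assms(1), of x] by (rule DERIV_isCont)
    thus "isCont (\<lambda>s. (fst (g s))^2) x" by (rule isCont_power)
  qed
  have g0: "(fst (g 0))^2 \<le> 3" using assms(1) by (simp add: sol_def)
  have "\<exists>s\<ge>0. s \<le> t \<and> (fst (g s))^2 = 3"
    by (rule IVT[of "\<lambda>s. (fst (g s))^2" 0 3 t, OF g0 _ assms(4) cont]) (use big in linarith)
  then obtain s where s: "0 \<le> s" "s \<le> t" "(fst (g s))^2 = 3" by blast
  have "(fst (g s))^4 = ((fst (g s))^2)^2" by simp
  hence "(fst (g s))^4 = 9" using s(3) by simp
  hence "(snd (g s))^2 / 2 + 3/4 = h" using sol_H[OF assms(1), of s] assms(2) s(3) by simp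
  moreover have "(snd (g s))^2 \<ge> 0" by simp
  ultimately show False using assms(3) by linarith
qed

lemma key_ineq:
  fixes u1 u2 v1 v2 :: real
  assumes "u1^2 \<le> 3" "u2^2 \<le> 3"
  shows "2 * (u1 - u2) * (v1 - v2) + 2 * (v1 - v2) * ((- u1 + u1^3/3) - (- u2 + u2^3/3))
     \<le> 3 * ((u1 - u2)^2 + (v1 - v2)^2)"
proof -
  define p where "p = u1 - u2"
  define q where "q = v1 - v2"
  define m where "m = (u1^2 + u1*u2 + u2^2) / 3"
  have e: "(- u1 + u1^3/3) - (- u2 + u2^3/3) = p * (m - 1)"
    unfolding p_def m_def by (simp add: field_simps power2_eq_square power3_eq_cube)
  have m0: "0 \<le> m"
  proof -
    have "u1^2 + u1*u2 + u2^2 = (u1 + u2/2)^2 + 3 * u2^2 / 4" by (simp add: algebra_simps power2_eq_square)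
    thus ?thesis unfolding m_def by simp
  qed
  have m3: "m \<le> 3"
  proof -
    have "2 * (u1 * u2) \<le> u1^2 + u2^2" using sum_squares_bound[of u1 u2] by (simp add: algebra_simps power2_eq_square)
    thus ?thesis unfolding m_def using assms by simp
  qed
  have lhs: "2 * (u1 - u2) * (v1 - v2) + 2 * (v1 - v2) * ((- u1 + u1^3/3) - (- u2 + u2^3/3)) = 2 * (p * q) * m"
    unfolding e unfolding p_def q_def by (simp add: algebra_simps)
  have "2 * (p * q) * m \<le> 2 * \<bar>p * q\<bar> * m" using m0 by (intro mult_right_mono) auto
  also have "\<dots> \<le> 2 * \<bar>p * q\<bar> * 3" using m3 by (intro mult_left_mono) auto
  also have "\<dots> \<le> 3 * (p^2 + q^2)"
  proof -
    have "0 \<le> (\<bar>p\<bar> - \<bar>q\<bar>)^2" by simp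
    hence "2 * \<bar>p\<bar> * \<bar>q\<bar> \<le> p^2 + q^2" by (simp add: power2_eq_square algebra_simps)
    thus ?thesis by (simp add: abs_mult)
  qed
  finally show ?thesis unfolding lhs p_def q_def .
qed

lemma sol_unique:
  assumes g1: "sol h g1" and g2: "sol h g2" and h: "0 < h" "h < 3/4" and t: "0 \<le> t"
  shows "g1 t = g2 t"
proof -
  define u1 where "u1 t = fst (g1 t)" for t
  define u2 where "u2 t = fst (g2 t)" for t
  define v1 where "v1 t = snd (g1 t)" for t
  define v2 where "v2 t = snd (g2 t)" for t
  define D where "D t = (u1 t - u2 t)^2 + (v1 t - v2 t)^2" for t
  define E where "E t = exp (- 3 * t) * D t" for t
  have du1: "\<And>t. (u1 has_real_derivative v1 t) (at t)"
    unfolding u1_def[abs_def] v1_def using sol_derivs(1)[OF g1] .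
  have du2: "\<And>t. (u2 has_real_derivative v2 t) (at t)"
    unfolding u2_def[abs_def] v2_def using sol_derivs(1)[OF g2] .
  have dv1: "\<And>t. (v1 has_real_derivative - u1 t + (u1 t)^3/3) (at t)"
    unfolding u1_def v1_def[abs_def] using sol_derivs(2)[OF g1] .
  have dv2: "\<And>t. (v2 has_real_derivative - u2 t + (u2 t)^3/3) (at t)"
    unfolding u2_def v2_def[abs_def] using sol_derivs(2)[OF g2] .
  have dE: "\<And>s. (E has_real_derivative exp (- 3 * s) * ((2 * (u1 s - u2 s) * (v1 s - v2 s) +
      2 * (v1 s - v2 s) * ((- u1 s + u1 s^3/3) - (- u2 s + u2 s^3/3))) - 3 * D s)) (at s)"
  proof -
    fix s
    have dD: "(D has_real_derivative (2 * (u1 s - u2 s) * (v1 s - v2 s) +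
      2 * (v1 s - v2 s) * ((- u1 s + u1 s^3/3) - (- u2 s + u2 s^3/3)))) (at s)"
    proof -
      have "(D has_real_derivative of_nat 2 * ((v1 s - v2 s) * (u1 s - u2 s) ^ (2 - Suc 0)) +
         of_nat 2 * (((- u1 s + u1 s^3/3) - (- u2 s + u2 s^3/3)) * (v1 s - v2 s) ^ (2 - Suc 0))) (at s)"
        unfolding D_def[abs_def]
        by (intro DERIV_add DERIV_power DERIV_diff du1 du2 dv1 dv2)
      thus ?thesis by (rule DERIV_cong) (simp add: field_simps)
    qed
    have "(E has_real_derivative exp (- 3 * s) * (- 3) * D s + (2 * (u1 s - u2 s) * (v1 s - v2 s) +
      2 * (v1 s - v2 s) * ((- u1 s + u1 s^3/3) - (- u2 s + u2 s^3/3))) * exp (- 3 * s)) (at s)"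
    proof -
      have de: "((\<lambda>s. exp (- 3 * s)) has_real_derivative exp (- 3 * s) * (- 3)) (at s)"
        by (auto intro!: derivative_eq_intros)
      show ?thesis unfolding E_def[abs_def] using DERIV_mult[OF de dD] by (simp add: mult.commute)
    qed
    thus "(E has_real_derivative exp (- 3 * s) * ((2 * (u1 s - u2 s) * (v1 s - v2 s) +
      2 * (v1 s - v2 s) * ((- u1 s + u1 s^3/3) - (- u2 s + u2 s^3/3))) - 3 * D s)) (at s)"
      by (simp add: algebra_simps)
  qed
  have "E t \<le> E 0"
  proof (rule DERIV_nonpos_imp_nonincreasing[where f=E, OF t])
    fix s assume s: "0 \<le> s" "s \<le> t"
    have b1: "(u1 s)^2 \<le> 3" unfolding u1_def using sol_u_bound[OF g1 h s(1)] .
    have b2: "(u2 s)^2 \<le> 3" unfolding u2_def using sol_u_bound[OF g2 h s(1)] .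
    have "(2 * (u1 s - u2 s) * (v1 s - v2 s) +
      2 * (v1 s - v2 s) * ((- u1 s + u1 s^3/3) - (- u2 s + u2 s^3/3))) - 3 * D s \<le> 0"
      using key_ineq[OF b1 b2, of "v1 s" "v2 s"] unfolding D_def by linarith
    hence "exp (- 3 * s) * ((2 * (u1 s - u2 s) * (v1 s - v2 s) +
      2 * (v1 s - v2 s) * ((- u1 s + u1 s^3/3) - (- u2 s + u2 s^3/3))) - 3 * D s) \<le> 0"
      by (simp add: mult_nonneg_nonpos)
    thus "\<exists>y. (E has_real_derivative y) (at s) \<and> y \<le> 0" using dE[of s] by blast
  qed
  moreover have "E 0 = 0" using g1 g2 unfolding E_def D_def u1_def u2_def v1_def v2_def sol_def by simp
  moreover have "D t \<ge> 0" unfolding D_def by simp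
  ultimately have "exp (- 3 * t) * D t \<le> 0" unfolding E_def by simp
  hence "D t \<le> 0" using exp_gt_zero[of "- 3 * t"] by (simp add: mult_le_0_iff)
  hence "D t = 0" using \<open>D t \<ge> 0\<close> by linarith
  hence "u1 t - u2 t = 0 \<and> v1 t - v2 t = 0" unfolding D_def by (simp only: sum_power2_eq_zero_iff)
  hence "u1 t = u2 t \<and> v1 t = v2 t" by simp
  thus ?thesis unfolding u1_def u2_def v1_def v2_def by (simp add: prod_eq_iff)
qed

lemma qf_cont_all: "continuous_on S (qf a)"
  unfolding qf_def[abs_def] by (intro continuous_intros) auto

lemma line_int_orbit:
  assumes "periodic_orbit2 h T g"
  shows "line_int_du P T g = integral {0..T} (\<lambda>t. P (fst (g t)) (snd (g t)) * snd (g t))"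
proof -
  have "\<And>t. vector_derivative g (at t) = field2 (g t)"
    using assms unfolding periodic_orbit2_def by (simp add: vector_derivative_at)
  thus ?thesis unfolding line_int_du_def by (simp add: field2_def)
qed

lemma orbit_sol: "periodic_orbit2 h T g \<Longrightarrow> sol h g"
  unfolding periodic_orbit2_def sol_def by simp

lemma orbit_eq:
  assumes h: "0 < h" "h < 3/4" and o: "periodic_orbit2 h T g"
  shows "T = Tper (aa h)" "\<And>t. 0 \<le> t \<Longrightarrow> g t = gg (aa h) t"
proof -
  note o0 = orbit_exists[OF h]
  show eq: "\<And>t. 0 \<le> t \<Longrightarrow> g t = gg (aa h) t"
    by (rule sol_unique[OF orbit_sol[OF o] orbit_sol[OF o0] h])
  have T: "0 < T" "g T = g 0" "\<forall>t\<in>{0<..<T}. g t \<noteq> g 0"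
    using o unfolding periodic_orbit2_def by (auto dest: spec[of _ 0])
  have T0: "0 < Tper (aa h)" "gg (aa h) (Tper (aa h)) = gg (aa h) 0"
     "\<forall>t\<in>{0<..<Tper (aa h)}. gg (aa h) t \<noteq> gg (aa h) 0"
    using o0 unfolding periodic_orbit2_def by (auto dest: spec[of _ 0])
  have "\<not> T < Tper (aa h)"
  proof
    assume "T < Tper (aa h)"
    hence "gg (aa h) T \<noteq> gg (aa h) 0" using T0(3) T(1) by auto
    moreover have "gg (aa h) T = gg (aa h) 0" using eq[of T] eq[of 0] T(1,2) by simp
    ultimately show False by simp
  qed
  moreover have "\<not> Tper (aa h) < T"
  proof
    assume "Tper (aa h) < T"
    hence "g (Tper (aa h)) \<noteq> g 0" using T(3) T0(1) by auto
    moreover have "g (Tper (aa h)) = g 0" using eq[of "Tper (aa h)"] eq[of 0] T0(1,2) by simp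
    ultimately show False by simp
  qed
  ultimately show "T = Tper (aa h)" by linarith
qed

lemma B2_formula:
  assumes h: "0 < h" "h < 3/4"
  shows "B2tilde h = line_int_du (\<lambda>u v. u^2 * v) (Tper (aa h)) (gg (aa h)) /
                     line_int_du (\<lambda>u v. v) (Tper (aa h)) (gg (aa h))"
proof -
  define p where "p = (SOME (T, g). periodic_orbit2 h T g)"
  have "(\<lambda>(T, g). periodic_orbit2 h T g) p"
    unfolding p_def by (rule someI[of _ "(Tper (aa h), gg (aa h))"]) (simp add: orbit_exists[OF h])
  hence o: "periodic_orbit2 h (fst p) (snd p)" by (simp add: case_prod_beta)
  have B: "B2tilde h = line_int_du (\<lambda>u v. u^2 * v) (fst p) (snd p) / line_int_du (\<lambda>u v. v) (fst p) (snd p)"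
    unfolding B2tilde_def p_def[symmetric] by (simp add: Let_def case_prod_beta)
  have T: "fst p = Tper (aa h)" by (rule orbit_eq(1)[OF h o])
  have e: "\<And>t. t \<in> {0..Tper (aa h)} \<Longrightarrow> snd p t = gg (aa h) t" using orbit_eq(2)[OF h o] by simp
  have L: "\<And>P. line_int_du P (fst p) (snd p) = line_int_du P (Tper (aa h)) (gg (aa h))"
  proof -
    fix P :: "real \<Rightarrow> real \<Rightarrow> real"
    have "line_int_du P (fst p) (snd p) = integral {0..Tper (aa h)} (\<lambda>t. P (fst (snd p t)) (snd (snd p t)) * snd (snd p t))"
      using line_int_orbit[OF o] T by simp
    also have "\<dots> = integral {0..Tper (aa h)} (\<lambda>t. P (fst (gg (aa h) t)) (snd (gg (aa h) t)) * snd (gg (aa h) t))"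
      by (rule Henstock_Kurzweil_Integration.integral_cong) (simp add: e)
    also have "\<dots> = line_int_du P (Tper (aa h)) (gg (aa h))"
      using line_int_orbit[OF orbit_exists[OF h]] by simp
    finally show "line_int_du P (fst p) (snd p) = line_int_du P (Tper (aa h)) (gg (aa h))" .
  qed
  show ?thesis using B L by simp
qed

lemma subst_th:
  assumes a: "(a::real)^2 < 3" and G: "continuous_on {0..2*pi} G"
  shows "integral {0..Tper a} (\<lambda>t. qf a (th a t) * G (th a t)) = integral {0..2*pi} G"
proof -
  have sub: "th a ` {0..Tper a} \<subseteq> {0..2*pi}"
  proof
    fix y assume "y \<in> th a ` {0..Tper a}"
    then obtain t where t: "0 \<le> t" "t \<le> Tper a" "y = th a t" by auto
    have "th a 0 \<le> th a t" "th a t \<le> th a (Tper a)"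
      using th_strict[OF a, of t 0] th_strict[OF a, of "Tper a" t] t by (auto simp: not_less)
    thus "y \<in> {0..2*pi}" using t th_0[OF a] th_Tper[OF a] by simp
  qed
  have "((\<lambda>t. qf a (th a t) *\<^sub>R G (th a t)) has_integral integral {th a 0..th a (Tper a)} G) {0..Tper a}"
    by (rule has_integral_substitution[OF _ _ sub G])
       (use Tper_pos[OF a] th_0[OF a] th_Tper[OF a] pi_gt_zero
         in \<open>auto intro: has_field_derivative_at_within th_deriv[OF a]\<close>)
  thus ?thesis using th_0[OF a] th_Tper[OF a] by (simp add: integral_unique)
qed

definition J0 :: "real \<Rightarrow> real" where
  "J0 a = integral {0..2*pi} (\<lambda>x. (cos x)^2 * qf a x)"
definition J1 :: "real \<Rightarrow> real" where
  "J1 a = integral {0..2*pi} (\<lambda>x. (sin x)^2 * (cos x)^2 * qf a x)"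

lemma I0_eq: assumes a: "(a::real)^2 < 3"
  shows "line_int_du (\<lambda>u v. v) (Tper a) (gg a) = a^2 * J0 a"
proof -
  have "line_int_du (\<lambda>u v. v) (Tper a) (gg a) = integral {0..Tper a} (\<lambda>t. snd (gg a t) * snd (gg a t))"
    unfolding line_int_du_def using vector_derivative_at[OF gg_deriv[OF a]] by (simp add: field2_def)
  also have "\<dots> = integral {0..Tper a} (\<lambda>t. qf a (th a t) * (a^2 * ((cos (th a t))^2 * qf a (th a t))))"
    by (simp add: gg_def cc_def power2_eq_square mult_ac)
  also have "\<dots> = integral {0..2*pi} (\<lambda>x. a^2 * ((cos x)^2 * qf a x))"
    by (rule subst_th[OF a]) (intro continuous_intros qf_cont_all)
  finally show ?thesis unfolding J0_def by simp
qed

lemma I1_eq: assumes a: "(a::real)^2 < 3"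
  shows "line_int_du (\<lambda>u v. u^2 * v) (Tper a) (gg a) = a^4 * J1 a"
proof -
  have "line_int_du (\<lambda>u v. u^2 * v) (Tper a) (gg a) = integral {0..Tper a} (\<lambda>t. (fst (gg a t))^2 * snd (gg a t) * snd (gg a t))"
    unfolding line_int_du_def using vector_derivative_at[OF gg_deriv[OF a]] by (simp add: field2_def)
  also have "\<dots> = integral {0..Tper a} (\<lambda>t. qf a (th a t) * (a^4 * ((sin (th a t))^2 * (cos (th a t))^2 * qf a (th a t))))"
    by (simp add: gg_def cc_def power2_eq_square power4_eq_xxxx mult_ac)
  also have "\<dots> = integral {0..2*pi} (\<lambda>x. a^4 * ((sin x)^2 * (cos x)^2 * qf a x))"
    by (rule subst_th[OF a]) (intro continuous_intros qf_cont_all)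
  finally show ?thesis unfolding J1_def by simp
qed

lemma B2_J: assumes h: "0 < h" "h < 3/4"
  shows "B2tilde h = (aa h)^2 * J1 (aa h) / J0 (aa h)"
proof -
  note p = aa_props[OF h]
  have "B2tilde h = (aa h)^4 * J1 (aa h) / ((aa h)^2 * J0 (aa h))"
    using B2_formula[OF h] I0_eq[OF p(2)] I1_eq[OF p(2)] by simp
  also have "(aa h)^4 = (aa h)^2 * (aa h)^2" by simp
  also have "(aa h)^2 * (aa h)^2 * J1 (aa h) / ((aa h)^2 * J0 (aa h)) = (aa h)^2 * ((aa h)^2 * J1 (aa h)) / ((aa h)^2 * J0 (aa h))"
    by (simp only: mult.assoc)
  also have "\<dots> = (aa h)^2 * J1 (aa h) / J0 (aa h)"
    using p(1) by (intro mult_divide_mult_cancel_left) simp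
  finally show ?thesis .
qed

lemma ftc_piece:
  fixes F f g :: "real \<Rightarrow> real"
  assumes lr: "l \<le> r" and F: "\<And>x. (F has_real_derivative f x) (at x)"
    and g: "\<And>x. x \<in> {l..r} \<Longrightarrow> g x = c * f x"
  shows "(g has_integral (c * F r - c * F l)) {l..r}"
proof -
  have "(g has_integral ((\<lambda>x. c * F x) r - (\<lambda>x. c * F x) l)) {l..r}"
  proof (rule fundamental_theorem_of_calculus[OF lr])
    fix x assume x: "x \<in> {l..r}"
    have "((\<lambda>x. c * F x) has_real_derivative c * f x) (at x within {l..r})"
      by (rule has_field_derivative_at_within, intro DERIV_cmult F)
    thus "((\<lambda>x. c * F x) has_vector_derivative g x) (at x within {l..r})"
      using g[OF x] by (simp add: has_real_derivative_iff_has_vector_derivative)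
  qed
  thus ?thesis by simp
qed

lemma sin_3pi2: "sin (3 * pi / 2) = -1"
proof -
  have e: "3 * pi / 2 = pi/2 + pi" by simp
  show ?thesis by (simp only: e sin_periodic_pi sin_pi_half)
qed

lemma cos_pos1: "x \<in> {0..pi/2} \<Longrightarrow> \<bar>cos x\<bar> = 1 * cos x"
  using cos_ge_zero[of x] by auto

lemma cos_neg2: assumes "x \<in> {pi/2..3*pi/2}" shows "\<bar>cos x\<bar> = -1 * cos x"
proof -
  have "0 \<le> cos (x - pi)" using assms by (intro cos_ge_zero) auto
  moreover have "cos (x - pi) = - cos x" by (simp add: cos_diff)
  ultimately show ?thesis by simp
qed

lemma cos_pos3: assumes "x \<in> {3*pi/2..2*pi}" shows "\<bar>cos x\<bar> = 1 * cos x"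
proof -
  have "0 \<le> cos (x - 2*pi)" using assms by (intro cos_ge_zero) auto
  moreover have "cos (x - 2*pi) = cos x" by (simp add: cos_diff)
  ultimately show ?thesis by simp
qed

lemma combine3:
  fixes g :: "real \<Rightarrow> real"
  assumes "(g has_integral i1) {0..pi/2}" "(g has_integral i2) {pi/2..3*pi/2}"
     "(g has_integral i3) {3*pi/2..2*pi}"
  shows "(g has_integral (i1 + i2 + i3)) {0..2*pi}"
proof -
  have "(g has_integral (i1 + i2)) {0..3*pi/2}"
    by (rule has_integral_combine[OF _ _ assms(1,2)]) (use pi_gt_zero in auto)
  show ?thesis
    by (rule has_integral_combine[OF _ _ \<open>(g has_integral (i1 + i2)) {0..3*pi/2}\<close> assms(3)]) (use pi_gt_zero in auto)
qed

lemma K0: "((\<lambda>x. (cos x)^2 * \<bar>cos x\<bar>) has_integral 8/3) {0..2*pi}"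
proof -
  define F where "F x = sin x - (sin x)^3 / 3" for x :: real
  have F: "\<And>x. (F has_real_derivative (cos x)^2 * cos x) (at x)"
  proof -
    fix x
    have "(F has_real_derivative cos x - (sin x)^2 * cos x) (at x)"
      unfolding F_def[abs_def] by (auto intro!: derivative_eq_intros simp: field_simps power2_eq_square)
    moreover have "cos x - (sin x)^2 * cos x = (cos x)^2 * cos x"
      unfolding cos_squared_eq by (simp add: algebra_simps)
    ultimately show "(F has_real_derivative (cos x)^2 * cos x) (at x)" by simp
  qed
  have p: "pi/2 \<le> 3*pi/2" "0 \<le> pi/2" "3*pi/2 \<le> 2*pi" using pi_gt_zero by auto
  have v: "F 0 = 0" "F (pi/2) = 2/3" "F (3*pi/2) = - 2/3" "F (2*pi) = 0"
    by (simp_all add: F_def sin_3pi2)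
  have h1: "\<And>x. x \<in> {0..pi/2} \<Longrightarrow> (cos x)^2 * \<bar>cos x\<bar> = 1 * ((cos x)^2 * cos x)"
    using cos_pos1 by simp
  have h2: "\<And>x. x \<in> {pi/2..3*pi/2} \<Longrightarrow> (cos x)^2 * \<bar>cos x\<bar> = -1 * ((cos x)^2 * cos x)"
    using cos_neg2 by simp
  have h3: "\<And>x. x \<in> {3*pi/2..2*pi} \<Longrightarrow> (cos x)^2 * \<bar>cos x\<bar> = 1 * ((cos x)^2 * cos x)"
    using cos_pos3 by simp
  have "((\<lambda>x. (cos x)^2 * \<bar>cos x\<bar>) has_integral (1 * F (pi/2) - 1 * F 0 + (-1 * F (3*pi/2) - -1 * F (pi/2)) + (1 * F (2*pi) - 1 * F (3*pi/2)))) {0..2*pi}"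
    by (rule combine3[OF ftc_piece[OF p(2) F h1] ftc_piece[OF p(1) F h2] ftc_piece[OF p(3) F h3]])
  thus ?thesis by (simp add: v)
qed

lemma K1: "((\<lambda>x. (sin x)^2 * (cos x)^2 * \<bar>cos x\<bar>) has_integral 8/15) {0..2*pi}"
proof -
  define F where "F x = (sin x)^3 / 3 - (sin x)^5 / 5" for x :: real
  have F: "\<And>x. (F has_real_derivative (sin x)^2 * (cos x)^2 * cos x) (at x)"
  proof -
    fix x
    have "(F has_real_derivative (sin x)^2 * cos x - (sin x)^4 * cos x) (at x)"
      unfolding F_def[abs_def] by (auto intro!: derivative_eq_intros simp: field_simps power2_eq_square power4_eq_xxxx)
    moreover have "(sin x)^2 * cos x - (sin x)^4 * cos x = (sin x)^2 * (cos x)^2 * cos x"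
      unfolding cos_squared_eq by (simp add: algebra_simps power2_eq_square power4_eq_xxxx)
    ultimately show "(F has_real_derivative (sin x)^2 * (cos x)^2 * cos x) (at x)" by simp
  qed
  have p: "pi/2 \<le> 3*pi/2" "0 \<le> pi/2" "3*pi/2 \<le> 2*pi" using pi_gt_zero by auto
  have v: "F 0 = 0" "F (pi/2) = 2/15" "F (3*pi/2) = - 2/15" "F (2*pi) = 0"
    by (simp_all add: F_def sin_3pi2)
  have h1: "\<And>x. x \<in> {0..pi/2} \<Longrightarrow> (sin x)^2 * (cos x)^2 * \<bar>cos x\<bar> = 1 * ((sin x)^2 * (cos x)^2 * cos x)"
    using cos_pos1 by simp
  have h2: "\<And>x. x \<in> {pi/2..3*pi/2} \<Longrightarrow> (sin x)^2 * (cos x)^2 * \<bar>cos x\<bar> = -1 * ((sin x)^2 * (cos x)^2 * cos x)"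
    using cos_neg2 by simp
  have h3: "\<And>x. x \<in> {3*pi/2..2*pi} \<Longrightarrow> (sin x)^2 * (cos x)^2 * \<bar>cos x\<bar> = 1 * ((sin x)^2 * (cos x)^2 * cos x)"
    using cos_pos3 by simp
  have "((\<lambda>x. (sin x)^2 * (cos x)^2 * \<bar>cos x\<bar>) has_integral (1 * F (pi/2) - 1 * F 0 + (-1 * F (3*pi/2) - -1 * F (pi/2)) + (1 * F (2*pi) - 1 * F (3*pi/2)))) {0..2*pi}"
    by (rule combine3[OF ftc_piece[OF p(2) F h1] ftc_piece[OF p(1) F h2] ftc_piece[OF p(3) F h3]])
  thus ?thesis by (simp add: v)
qed

lemma qf_sqrt3: "qf (sqrt 3) x = \<bar>cos x\<bar> / sqrt 2"
proof -
  have c: "(cos x)^2 = 1 - (sin x)^2" by (rule cos_squared_eq)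
  have r: "1 - 3 * (1 + (sin x)^2) / 6 = (cos x)^2 / 2"
    unfolding c by (simp add: field_simps)
  have s3: "(sqrt 3)^2 = (3::real)" by simp
  have "qf (sqrt 3) x = sqrt ((cos x)^2 / 2)" unfolding qf_def by (simp only: s3 r)
  thus ?thesis by (simp add: real_sqrt_divide)
qed

lemma J0_sqrt3: "J0 (sqrt 3) = (8/3) / sqrt 2"
proof -
  have f: "(\<lambda>x. (cos x)^2 * qf (sqrt 3) x) = (\<lambda>x. (cos x)^2 * \<bar>cos x\<bar> / sqrt 2)"
    by (simp add: qf_sqrt3)
  have e: "integral {0..2*pi} (\<lambda>x. (cos x)^2 * \<bar>cos x\<bar>) = 8/3" by (rule integral_unique[OF K0])
  show ?thesis unfolding J0_def by (simp only: f integral_divide e)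
qed

lemma J1_sqrt3: "J1 (sqrt 3) = (8/15) / sqrt 2"
proof -
  have f: "(\<lambda>x. (sin x)^2 * (cos x)^2 * qf (sqrt 3) x) = (\<lambda>x. (sin x)^2 * (cos x)^2 * \<bar>cos x\<bar> / sqrt 2)"
    by (simp add: qf_sqrt3)
  have e: "integral {0..2*pi} (\<lambda>x. (sin x)^2 * (cos x)^2 * \<bar>cos x\<bar>) = 8/15" by (rule integral_unique[OF K1])
  show ?thesis unfolding J1_def by (simp only: f integral_divide e)
qed

lemma sqrt_diff_le:
  assumes "0 \<le> x" "0 \<le> y" shows "\<bar>sqrt x - sqrt y\<bar> \<le> sqrt \<bar>x - y\<bar>"
proof (cases "y \<le> x")
  case True
  have "sqrt x = sqrt (y + (x - y))" by simp
  also have "\<dots> \<le> sqrt y + sqrt (x - y)" using True assms by (intro sqrt_add_le_add_sqrt) auto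
  finally show ?thesis using True by (simp add: real_sqrt_le_mono)
next
  case False
  have "sqrt y = sqrt (x + (y - x))" by simp
  also have "\<dots> \<le> sqrt x + sqrt (y - x)" using False assms by (intro sqrt_add_le_add_sqrt) auto
  finally show ?thesis using False by (simp add: real_sqrt_le_mono abs_minus_commute)
qed

lemma rad_nonneg: assumes "(a::real)^2 \<le> 3" shows "0 \<le> 1 - a^2 * (1 + (sin x)^2) / 6"
proof -
  have "(sin x)^2 \<le> 1" by (simp add: abs_square_le_1 abs_sin_le_one)
  hence "a^2 * (1 + (sin x)^2) \<le> a^2 * 2" by (intro mult_left_mono) auto
  thus ?thesis using assms by linarith
qed

lemma qf_diff:
  assumes "(a::real)^2 \<le> 3" "b^2 \<le> 3"
  shows "\<bar>qf a x - qf b x\<bar> \<le> sqrt (\<bar>a^2 - b^2\<bar> / 3)"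
proof -
  have "\<bar>qf a x - qf b x\<bar> \<le> sqrt \<bar>(1 - a^2 * (1 + (sin x)^2) / 6) - (1 - b^2 * (1 + (sin x)^2) / 6)\<bar>"
    unfolding qf_def by (intro sqrt_diff_le rad_nonneg assms)
  also have "\<bar>(1 - a^2 * (1 + (sin x)^2) / 6) - (1 - b^2 * (1 + (sin x)^2) / 6)\<bar> = \<bar>a^2 - b^2\<bar> * (1 + (sin x)^2) / 6"
  proof -
    have "(1 - a^2 * (1 + (sin x)^2) / 6) - (1 - b^2 * (1 + (sin x)^2) / 6) = (b^2 - a^2) * ((1 + (sin x)^2) / 6)"
      by (simp add: field_simps)
    hence "\<bar>(1 - a^2 * (1 + (sin x)^2) / 6) - (1 - b^2 * (1 + (sin x)^2) / 6)\<bar> = \<bar>b^2 - a^2\<bar> * \<bar>(1 + (sin x)^2) / 6\<bar>"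
      by (simp only: abs_mult)
    moreover have "\<bar>(1 + (sin x)^2) / 6\<bar> = (1 + (sin x)^2) / 6" by (intro abs_of_nonneg) simp
    ultimately show ?thesis by (simp add: abs_minus_commute)
  qed
  also have "\<dots> \<le> \<bar>a^2 - b^2\<bar> / 3"
  proof -
    have "(sin x)^2 \<le> 1" by (simp add: abs_square_le_1 abs_sin_le_one)
    hence "\<bar>a^2 - b^2\<bar> * (1 + (sin x)^2) \<le> \<bar>a^2 - b^2\<bar> * 2" by (intro mult_left_mono) auto
    thus ?thesis by (simp add: mult.commute)
  qed
  finally show ?thesis by (simp add: real_sqrt_le_mono)
qed

lemma J_bound:
  fixes w :: "real \<Rightarrow> real"
  assumes a: "(a::real)^2 \<le> 3" and w: "continuous_on UNIV w" "\<And>x. \<bar>w x\<bar> \<le> 1"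
  shows "\<bar>integral {0..2*pi} (\<lambda>x. w x * qf a x) - integral {0..2*pi} (\<lambda>x. w x * qf (sqrt 3) x)\<bar>
     \<le> sqrt (\<bar>a^2 - 3\<bar> / 3) * (2 * pi)"
proof -
  have i: "\<And>b. (\<lambda>x. w x * qf b x) integrable_on {0..2*pi}"
    by (intro integrable_continuous_real continuous_intros qf_cont_all continuous_on_subset[OF w(1)]) auto
  have "integral {0..2*pi} (\<lambda>x. w x * qf a x) - integral {0..2*pi} (\<lambda>x. w x * qf (sqrt 3) x)
      = integral {0..2*pi} (\<lambda>x. w x * qf a x - w x * qf (sqrt 3) x)"
    by (rule Henstock_Kurzweil_Integration.integral_diff[symmetric, OF i i])
  moreover have "norm (integral {0..2*pi} (\<lambda>x. w x * qf a x - w x * qf (sqrt 3) x)) \<le> sqrt (\<bar>a^2 - 3\<bar> / 3) * Henstock_Kurzweil_Integration.content {0..2*pi}"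
  proof (rule has_integral_bound_real[where S="{}"])
    show "((\<lambda>x. w x * qf a x - w x * qf (sqrt 3) x) has_integral integral {0..2*pi} (\<lambda>x. w x * qf a x - w x * qf (sqrt 3) x)) {0..2*pi}"
      using integrable_diff[OF i i] by (rule integrable_integral)
    fix x
    have "\<bar>w x * qf a x - w x * qf (sqrt 3) x\<bar> = \<bar>w x\<bar> * \<bar>qf a x - qf (sqrt 3) x\<bar>"
      by (simp add: abs_mult[symmetric] right_diff_distrib)
    also have "\<dots> \<le> 1 * sqrt (\<bar>a^2 - (sqrt 3)^2\<bar> / 3)"
      by (intro mult_mono w(2) qf_diff a) auto
    finally show "norm (w x * qf a x - w x * qf (sqrt 3) x) \<le> sqrt (\<bar>a^2 - 3\<bar> / 3)" by simp
  qed auto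
  ultimately show ?thesis using pi_gt_zero by simp
qed

lemma ev_F: "eventually (\<lambda>h. 0 < h \<and> h < 3/4) (at_left (3/4::real))"
  using eventually_at_left_real[of 0 "3/4::real"] by (simp add: eventually_mono)

lemma lim_bound: "((\<lambda>h. sqrt (sqrt (9 - 12 * h) / 3) * (2 * pi)) \<longlongrightarrow> 0) (at_left (3/4::real))"
proof -
  have "((\<lambda>h. sqrt (sqrt (9 - 12 * h) / 3) * (2 * pi)) \<longlongrightarrow> sqrt (sqrt (9 - 12 * (3/4)) / 3) * (2 * pi)) (at_left (3/4::real))"
    by (intro tendsto_intros) auto
  thus ?thesis by simp
qed

lemma lim_a2: "((\<lambda>h. (aa h)^2) \<longlongrightarrow> 3) (at_left (3/4::real))"
proof -
  have "((\<lambda>h. 3 - sqrt (9 - 12 * h)) \<longlongrightarrow> 3 - sqrt (9 - 12 * (3/4))) (at_left (3/4::real))"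
    by (intro tendsto_intros)
  hence "((\<lambda>h. 3 - sqrt (9 - 12 * h)) \<longlongrightarrow> 3) (at_left (3/4::real))" by simp
  moreover have "eventually (\<lambda>h. 3 - sqrt (9 - 12 * h) = (aa h)^2) (at_left (3/4::real))"
    using ev_F by (rule eventually_mono) (simp add: aa_props(3))
  ultimately show ?thesis by (rule Lim_transform_eventually)
qed

lemma lim_Jw:
  fixes w :: "real \<Rightarrow> real"
  assumes w: "continuous_on UNIV w" "\<And>x. \<bar>w x\<bar> \<le> 1"
  shows "((\<lambda>h. integral {0..2*pi} (\<lambda>x. w x * qf (aa h) x)) \<longlongrightarrow> integral {0..2*pi} (\<lambda>x. w x * qf (sqrt 3) x)) (at_left (3/4::real))"
proof -
  have "((\<lambda>h. integral {0..2*pi} (\<lambda>x. w x * qf (aa h) x) - integral {0..2*pi} (\<lambda>x. w x * qf (sqrt 3) x)) \<longlongrightarrow> 0) (at_left (3/4::real))"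
  proof (rule Lim_null_comparison[OF _ lim_bound])
    show "eventually (\<lambda>h. norm (integral {0..2*pi} (\<lambda>x. w x * qf (aa h) x) - integral {0..2*pi} (\<lambda>x. w x * qf (sqrt 3) x))
        \<le> sqrt (sqrt (9 - 12 * h) / 3) * (2 * pi)) (at_left (3/4::real))"
      using ev_F
    proof (rule eventually_mono)
      fix h :: real assume h: "0 < h \<and> h < 3/4"
      note p = aa_props[OF conjunct1[OF h] conjunct2[OF h]]
      have "0 \<le> 9 - 12 * h" using h by simp
      hence "\<bar>(aa h)^2 - 3\<bar> = sqrt (9 - 12 * h)" using p(3) by simp
      thus "norm (integral {0..2*pi} (\<lambda>x. w x * qf (aa h) x) - integral {0..2*pi} (\<lambda>x. w x * qf (sqrt 3) x))
        \<le> sqrt (sqrt (9 - 12 * h) / 3) * (2 * pi)"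
        using J_bound[OF less_imp_le[OF p(2)] w] by simp
    qed
  qed
  thus ?thesis by (simp add: LIM_zero_iff)
qed

lemma cont_cos_U: "continuous_on UNIV (cos :: real \<Rightarrow> real)"
  by (intro continuous_at_imp_continuous_on ballI isCont_cos)
lemma cont_sin_U: "continuous_on UNIV (sin :: real \<Rightarrow> real)"
  by (intro continuous_at_imp_continuous_on ballI isCont_sin)

lemma lim_J0: "((\<lambda>h. J0 (aa h)) \<longlongrightarrow> J0 (sqrt 3)) (at_left (3/4::real))"
  unfolding J0_def
proof (rule lim_Jw[of "\<lambda>x. (cos x)^2"])
  show "continuous_on UNIV (\<lambda>x::real. (cos x)^2)" by (intro continuous_intros cont_cos_U)
  show "\<And>x::real. \<bar>(cos x)^2\<bar> \<le> 1" by (simp add: abs_square_le_1 abs_cos_le_one)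
qed

lemma lim_J1: "((\<lambda>h. J1 (aa h)) \<longlongrightarrow> J1 (sqrt 3)) (at_left (3/4::real))"
proof -
  have b: "\<And>x. \<bar>(sin x)^2 * (cos x)^2\<bar> \<le> (1::real)"
  proof -
    fix x :: real
    have "(sin x)^2 \<le> 1" "(cos x)^2 \<le> 1" by (simp_all add: abs_square_le_1 abs_sin_le_one abs_cos_le_one)
    hence "(sin x)^2 * (cos x)^2 \<le> 1 * 1" by (intro mult_mono) auto
    thus "\<bar>(sin x)^2 * (cos x)^2\<bar> \<le> 1" by simp
  qed
  show ?thesis unfolding J1_def
  proof (rule lim_Jw[of "\<lambda>x. (sin x)^2 * (cos x)^2"])
    show "continuous_on UNIV (\<lambda>x::real. (sin x)^2 * (cos x)^2)" by (intro continuous_intros cont_cos_U cont_sin_U)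
  qed (rule b)
qed

theorem mainTheorem7:
  shows "(B2tilde \<longlongrightarrow> 3/5) (at_left (3/4)) \<and> (c0 \<longlongrightarrow> 5/2) (at_left (3/4))"
proof -
  have l: "((\<lambda>h. (aa h)^2 * J1 (aa h) / J0 (aa h)) \<longlongrightarrow> 3 * J1 (sqrt 3) / J0 (sqrt 3)) (at_left (3/4::real))"
    by (intro tendsto_intros lim_a2 lim_J0 lim_J1) (simp add: J0_sqrt3)
  have v: "3 * J1 (sqrt 3) / J0 (sqrt 3) = 3/5" by (simp add: J0_sqrt3 J1_sqrt3 field_simps)
  have ev: "eventually (\<lambda>h. (aa h)^2 * J1 (aa h) / J0 (aa h) = B2tilde h) (at_left (3/4::real))"
    using ev_F by (rule eventually_mono) (simp add: B2_J)
  have B: "(B2tilde \<longlongrightarrow> 3/5) (at_left (3/4))"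
    using Lim_transform_eventually[OF l ev] v by simp
  have "((\<lambda>h. 1 / (1 - B2tilde h)) \<longlongrightarrow> 1 / (1 - 3/5)) (at_left (3/4::real))"
    by (intro tendsto_intros B) simp
  hence "((\<lambda>h. 1 / (1 - B2tilde h)) \<longlongrightarrow> 5/2) (at_left (3/4::real))" by simp
  hence C: "(c0 \<longlongrightarrow> 5/2) (at_left (3/4))" unfolding c0_def[abs_def] .
  show ?thesis using B C by simp
qed

end
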